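(* If $\Gamma$ is an ellipse which is not a circle, then the matching problem for $\Gamma$ has only the trivial solution (every solution $(f,g)$ consists of constants).
   Context: For a Jordan curve $\Gamma$ with interior domain $\Omega$ and exterior domain $\Omega':=\widehat{\mathbb C}\setminus\overline\Omega$, a solution of the matching problem is a pair $(f,g)$ with: $f$ holomorphic in $\Omega$ and continuous on $\overline\Omega$; $g$ holomorphic in $\Omega'$, continuous on $\overline{\Omega'}$, with $g(\infty)=0$; and $f(\zeta)=\overline{g(\zeta)}$ for all $\zeta\in\Gamma$. It is non-trivial if $f,g$ are non-constant. *)

theory Defs
  imports "HOL-Complex_Analysis.Complex_Analysis"
begin

definition ellipse :: "complex \<Rightarrow> real \<Rightarrow> real \<Rightarrow> real \<Rightarrow> complex set" where
  "ellipse c a b theta =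
     {c + cis theta * Complex (a * cos t) (b * sin t) | t. t \<in> {0..2*pi}}"

definition holomorphic_at_infinity_with_value ::
    "(complex \<Rightarrow> complex) \<Rightarrow> complex \<Rightarrow> bool" where
  "holomorphic_at_infinity_with_value g v \<longleftrightarrow>
     (\<exists>r>0. (\<lambda>w. if w = 0 then v else g (1 / w)) holomorphic_on ball 0 r)"

text \<open>Solution of the matching problem for a Jordan curve \<Gamma> with interior
  domain inside \<Gamma> and exterior domain (in the sphere) outside \<Gamma> \<union> {\<infinity>}.\<close>
definition matching_solution ::
    "complex set \<Rightarrow> (complex \<Rightarrow> complex) \<Rightarrow> (complex \<Rightarrow> complex) \<Rightarrow> bool" where
  "matching_solution \<Gamma> f g \<longleftrightarrow>
     f holomorphic_on inside \<Gamma> \<and> continuous_on (closure (inside \<Gamma>)) f \<and>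
     g holomorphic_on outside \<Gamma> \<and> continuous_on (closure (outside \<Gamma>)) g \<and>
     holomorphic_at_infinity_with_value g 0 \<and>
     (\<forall>\<zeta>\<in>\<Gamma>. f \<zeta> = cnj (g \<zeta>))"

end

theory Submission
  imports Defs
begin

locale ell =
  fixes c :: complex and a b theta :: real
  assumes a: "a > 0" and b: "b > 0" and ab: "a \<noteq> b"
begin

definition "AA = (a+b)/2"
definition "BB = (a-b)/2"
definition "r0 = \<bar>BB\<bar>/AA"
definition "phi w = c + cis theta * (complex_of_real AA * w + complex_of_real BB / w)"
definition "U z = (z - c) * cis (- theta)"
definition "N z = complex_of_real (Re (U z) / a) + \<i> * complex_of_real (Im (U z) / b)"
definition "Kset = {z. cmod (N z) \<le> 1}"

lemma AA_pos: "AA > 0" using a b by (simp add: AA_def)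
lemma BB_ne: "BB \<noteq> 0" using ab by (simp add: BB_def)
lemma aAB: "a = AA + BB" and bAB: "b = AA - BB" by (simp_all add: AA_def BB_def field_simps)
lemma absB: "\<bar>BB\<bar> < AA" using a b by (auto simp: AA_def BB_def abs_less_iff)
lemma r0_pos: "0 < r0" using AA_pos BB_ne by (simp add: r0_def)
lemma r0_lt1: "r0 < 1" using AA_pos absB by (simp add: r0_def)

lemma Re_N [simp]: "Re (N z) = Re (U z) / a" and Im_N [simp]: "Im (N z) = Im (U z) / b"
  by (simp_all add: N_def)

lemma U_inv: "z = c + cis theta * U z"
proof -
  have "cis theta * cis (- theta) = 1" by (simp add: cis_mult)
  then have "cis theta * U z = (z - c) * (cis theta * cis (- theta))" by (simp add: U_def algebra_simps)
  then show ?thesis using \<open>cis theta * cis (- theta) = 1\<close> by simp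
qed

lemma U_N: "U z = complex_of_real (a * Re (N z)) + \<i> * complex_of_real (b * Im (N z))"
  using a b by (simp add: complex_eq_iff)

lemma cmodU: "cmod (U z) = cmod (z - c)"
  by (simp add: U_def norm_mult)

lemma ellipse_eq: "ellipse c a b theta = {z. cmod (N z) = 1}"
proof (intro set_eqI iffI)
  fix z assume "z \<in> ellipse c a b theta"
  then obtain t where z: "z = c + cis theta * Complex (a * cos t) (b * sin t)"
    by (auto simp: ellipse_def)
  have "U z = Complex (a * cos t) (b * sin t) * (cis theta * cis (- theta))"
    by (simp add: U_def z algebra_simps)
  also have "cis theta * cis (- theta) = 1" by (simp add: cis_mult)
  finally have "N z = Complex (cos t) (sin t)" using a b by (simp add: complex_eq_iff)
  then show "z \<in> {z. cmod (N z) = 1}" by (simp add: cmod_def del: Re_N Im_N)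
next
  fix z assume "z \<in> {z. cmod (N z) = 1}"
  then have "(Re (N z))\<^sup>2 + (Im (N z))\<^sup>2 = 1"
    by (metis cmod_power2 mem_Collect_eq one_power2)
  then obtain t where t: "0 \<le> t" "t < 2*pi" "Re (N z) = cos t" "Im (N z) = sin t"
    by (rule sincos_total_2pi)
  have "U z = Complex (a * cos t) (b * sin t)"
    using U_N[of z] t a b by (simp add: complex_eq_iff field_simps)
  then have "z = c + cis theta * Complex (a * cos t) (b * sin t)"
    using U_inv[of z] by simp
  then show "z \<in> ellipse c a b theta" unfolding ellipse_def using t by auto
qed

lemma N_affine: "N (c + complex_of_real s * (z - c)) = complex_of_real s * N z"
  by (simp add: N_def U_def algebra_simps complex_eq_iff)

lemma N_convex: "N (complex_of_real u * x + complex_of_real v * y) = complex_of_real u * N x + complex_of_real v * N y"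
  if "u + v = 1"
proof -
  have uv: "complex_of_real u + complex_of_real v = 1" using that by (metis of_real_add of_real_1)
  have "complex_of_real u * (x - c) + complex_of_real v * (y - c) = complex_of_real u * x + complex_of_real v * y - (complex_of_real u + complex_of_real v) * c"
    by (simp add: algebra_simps)
  then have eq: "complex_of_real u * x + complex_of_real v * y - c = complex_of_real u * (x - c) + complex_of_real v * (y - c)"
    using uv by simp
  have "U (complex_of_real u * x + complex_of_real v * y) = complex_of_real u * U x + complex_of_real v * U y"
    unfolding U_def eq by (simp add: algebra_simps)
  then show ?thesis by (simp add: N_def complex_eq_iff add_divide_distrib)
qed

lemma cont_N: "continuous_on UNIV N"
  unfolding N_def U_def using a b by (auto intro!: continuous_intros)

lemma convex_K: "convex Kset"
proof (rule convexI)
  fix x y and u v :: real assume xy: "x \<in> Kset" "y \<in> Kset" and uv: "0 \<le> u" "0 \<le> v" "u + v = 1"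
  have "cmod (N (u *\<^sub>R x + v *\<^sub>R y)) = cmod (complex_of_real u * N x + complex_of_real v * N y)"
    using N_convex[OF uv(3)] by (simp add: scaleR_conv_of_real)
  also have "\<dots> \<le> u * cmod (N x) + v * cmod (N y)"
    by (rule order_trans[OF norm_triangle_ineq]) (simp add: norm_mult uv)
  also have "\<dots> \<le> u * 1 + v * 1"
    using xy uv by (intro add_mono mult_left_mono) (auto simp: Kset_def)
  finally show "u *\<^sub>R x + v *\<^sub>R y \<in> Kset" using uv by (simp add: Kset_def)
qed

lemma bounded_K: "bounded Kset"
proof -
  have "Kset \<subseteq> cball c (a + b)"
  proof
    fix z assume "z \<in> Kset"
    then have n: "cmod (N z) \<le> 1" by (simp add: Kset_def)
    have "\<bar>Re (N z)\<bar> \<le> 1" "\<bar>Im (N z)\<bar> \<le> 1"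
      using n abs_Re_le_cmod abs_Im_le_cmod order_trans by blast+
    then have "\<bar>a * Re (N z)\<bar> \<le> a" "\<bar>b * Im (N z)\<bar> \<le> b"
      using a b by (auto simp: abs_mult intro: mult_left_le)
    moreover have "Re (U z) = a * Re (N z)" "Im (U z) = b * Im (N z)" using a b by simp_all
    moreover have "cmod (U z) \<le> \<bar>Re (U z)\<bar> + \<bar>Im (U z)\<bar>" by (rule cmod_le)
    ultimately have "cmod (z - c) \<le> a + b" using cmodU[of z] by linarith
    then show "z \<in> cball c (a + b)" by (simp add: dist_norm norm_minus_commute)
  qed
  then show ?thesis using bounded_subset by blast
qed

lemma closed_K: "closed Kset"
  unfolding Kset_def using cont_N by (intro closed_Collect_le continuous_intros) (auto simp: continuous_on_eq_continuous_within)

lemma interior_K: "interior Kset = {z. cmod (N z) < 1}"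
proof
  have "open {z. cmod (N z) < 1}"
    using cont_N by (intro open_Collect_less continuous_intros) (auto simp: continuous_on_eq_continuous_within)
  then show "{z. cmod (N z) < 1} \<subseteq> interior Kset"
    by (intro interior_maximal) (auto simp: Kset_def)
next
  show "interior Kset \<subseteq> {z. cmod (N z) < 1}"
  proof
    fix z assume z: "z \<in> interior Kset"
    then obtain e where e: "e > 0" "ball z e \<subseteq> Kset" by (meson mem_interior)
    have zK: "cmod (N z) \<le> 1" using z interior_subset by (auto simp: Kset_def)
    show "z \<in> {z. cmod (N z) < 1}"
    proof (rule ccontr)
      assume "z \<notin> {z. cmod (N z) < 1}"
      then have n1: "cmod (N z) = 1" using zK by simp
      have zc: "z \<noteq> c"
        using n1 N_affine[of 0 z] by auto
      define t where "t = e / (2 * cmod (z - c))"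
      have t: "t > 0" using e zc by (simp add: t_def)
      define y where "y = c + complex_of_real (1 + t) * (z - c)"
      have "y - z = complex_of_real t * (z - c)" by (simp add: y_def algebra_simps)
      then have "dist y z = t * cmod (z - c)" using t by (simp add: dist_norm norm_mult)
      also have "\<dots> = e / 2" using zc by (simp add: t_def)
      finally have "y \<in> ball z e" using e by (simp add: dist_commute)
      then have "y \<in> Kset" using e(2) by blast
      then have "cmod (N y) \<le> 1" by (simp add: Kset_def)
      moreover have "N y = complex_of_real (1 + t) * N z"
        using N_affine[of "1 + t" z] by (simp add: y_def)
      then have "cmod (N y) = 1 + t"
        using n1 t by (simp add: norm_mult del: of_real_add)
      ultimately show False using t by simp
    qed
  qed
qed

lemma frontier_K: "frontier Kset = {z. cmod (N z) = 1}"
proof -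
  have "frontier Kset = Kset - interior Kset" using closed_K by (simp add: frontier_def closure_closed)
  then show ?thesis using interior_K by (auto simp: Kset_def)
qed

lemma Gamma_frontier: "ellipse c a b theta = frontier Kset"
  using ellipse_eq frontier_K by simp

lemma inside_eq: "inside (ellipse c a b theta) = {z. cmod (N z) < 1}"
  using Gamma_frontier inside_frontier_eq_interior[OF bounded_K convex_K] interior_K by simp

lemma outside_eq: "outside (ellipse c a b theta) = {z. cmod (N z) > 1}"
proof -
  have "outside (ellipse c a b theta) = - closure Kset"
    unfolding Gamma_frontier by (rule outside_frontier_eq_complement_closure[OF bounded_K convex_K])
  also have "closure Kset = Kset" using closed_K by (rule closure_closed)
  finally have "outside (ellipse c a b theta) = - Kset" .
  then show ?thesis by (simp add: Kset_def set_eq_iff not_le)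
qed



lemma U_phi: "w \<noteq> 0 \<Longrightarrow> U (phi w) = complex_of_real AA * w + complex_of_real BB / w"
proof -
  have "cis theta * cis (- theta) = 1" by (simp add: cis_mult)
  have "U (phi w) = (cis theta * (complex_of_real AA * w + complex_of_real BB / w)) * cis (- theta)"
    by (simp add: U_def phi_def)
  also have "\<dots> = (complex_of_real AA * w + complex_of_real BB / w) * (cis theta * cis (- theta))"
    by (simp only: ac_simps)
  finally show "U (phi w) = complex_of_real AA * w + complex_of_real BB / w"
    using \<open>cis theta * cis (- theta) = 1\<close> by simp
qed

lemma key_BB: "r0 < r \<Longrightarrow> \<bar>BB\<bar> / r < AA"
proof -
  assume r: "r0 < r"
  then have "r > 0" using r0_pos by simp
  from r have "\<bar>BB\<bar> / AA < r" by (simp add: r0_def)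
  then have "\<bar>BB\<bar> < r * AA" using AA_pos by (simp add: field_simps)
  then show ?thesis using \<open>r > 0\<close> by (simp add: field_simps)
qed

lemma key_pos: "r0 < r \<Longrightarrow> AA - BB / r > 0 \<and> AA + BB / r > 0"
proof -
  assume r: "r0 < r"
  then have "r > 0" using r0_pos by simp
  have "\<bar>BB\<bar> / r < AA" using key_BB[OF r] by simp
  then have "\<bar>BB / r\<bar> < AA" using \<open>r > 0\<close> by simp
  then have c: "BB / r < AA \<and> - (BB / r) < AA" by (simp only: abs_less_iff)
  then show ?thesis by auto
qed

lemma wsum_gt: "(0::real) \<le> al \<Longrightarrow> 0 \<le> be \<Longrightarrow> al + be = 1 \<Longrightarrow> P > 1 \<Longrightarrow> Q > 1 \<Longrightarrow> P * al + Q * be > 1"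
proof -
  assume h: "0 \<le> al" "0 \<le> be" "al + be = 1" "P > 1" "Q > 1"
  have "min P Q * al \<le> P * al" "min P Q * be \<le> Q * be" using h by (auto intro: mult_right_mono)
  moreover have "min P Q * al + min P Q * be = min P Q" using h by (simp add: distrib_left[symmetric])
  moreover have "min P Q > 1" using h by simp
  ultimately show ?thesis by linarith
qed

lemma wsum_lt: "(0::real) \<le> al \<Longrightarrow> 0 \<le> be \<Longrightarrow> al + be = 1 \<Longrightarrow> P < 1 \<Longrightarrow> Q < 1 \<Longrightarrow> P * al + Q * be < 1"
proof -
  assume h: "0 \<le> al" "0 \<le> be" "al + be = 1" "P < 1" "Q < 1"
  have "P * al \<le> max P Q * al" "Q * be \<le> max P Q * be" using h by (auto intro: mult_right_mono)
  moreover have "max P Q * al + max P Q * be = max P Q" using h by (simp add: distrib_left[symmetric])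
  moreover have "max P Q < 1" using h by simp
  ultimately show ?thesis by linarith
qed

lemma N_phi_sq:
  assumes w: "w \<noteq> 0"
  defines "r \<equiv> cmod w"
  shows "(cmod (N (phi w)))\<^sup>2 = ((AA * r + BB / r) / a)\<^sup>2 * (Re w / r)\<^sup>2 + ((AA * r - BB / r) / b)\<^sup>2 * (Im w / r)\<^sup>2"
    and "(Re w / r)\<^sup>2 + (Im w / r)\<^sup>2 = 1"
proof -
  have r: "r > 0" using w by (simp add: r_def)
  have r2: "r\<^sup>2 = (Re w)\<^sup>2 + (Im w)\<^sup>2" by (simp add: r_def cmod_power2)
  have ReI: "Re (complex_of_real BB / w) = BB * Re w / r\<^sup>2" "Im (complex_of_real BB / w) = - BB * Im w / r\<^sup>2"
    using r2 by (simp_all add: Re_divide Im_divide power2_eq_square)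
  have e1: "Re (N (phi w)) = (AA * r + BB / r) / a * (Re w / r)"
    using U_phi[OF w] ReI r a by (simp add: field_simps power2_eq_square)
  have e2: "Im (N (phi w)) = (AA * r - BB / r) / b * (Im w / r)"
    using U_phi[OF w] ReI r b by (simp add: field_simps power2_eq_square)
  show "(cmod (N (phi w)))\<^sup>2 = ((AA * r + BB / r) / a)\<^sup>2 * (Re w / r)\<^sup>2 + ((AA * r - BB / r) / b)\<^sup>2 * (Im w / r)\<^sup>2"
    by (simp only: cmod_power2 e1 e2 power_mult_distrib)
  show "(Re w / r)\<^sup>2 + (Im w / r)\<^sup>2 = 1"
  proof -
    have "(Re w / r)\<^sup>2 + (Im w / r)\<^sup>2 = ((Re w)\<^sup>2 + (Im w)\<^sup>2) / r\<^sup>2" by (simp add: power_divide add_divide_distrib)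
    also have "\<dots> = 1" unfolding r2[symmetric] using r by simp
    finally show ?thesis .
  qed
qed

lemma phi_gt:
  assumes "cmod w > 1" shows "cmod (N (phi w)) > 1"
proof -
  define r where "r = cmod w"
  have w: "w \<noteq> 0" using assms by auto
  have r: "r > 1" "r > r0" using assms r0_lt1 by (simp_all add: r_def)
  then have r1: "r > 0" by simp
  have kp: "AA - BB / r > 0" "AA + BB / r > 0" using key_pos[OF r(2)] by auto
  have "AA * r + BB / r - (AA + BB) = (r - 1) * (AA - BB / r)" using r1 by (simp add: field_simps)
  also have "\<dots> > 0" using kp r by (intro mult_pos_pos) auto
  finally have "AA * r + BB / r > a" using aAB by linarith
  then have X: "(AA * r + BB / r) / a > 1" using a by (simp add: field_simps)
  have "AA * r - BB / r - (AA - BB) = (r - 1) * (AA + BB / r)" using r1 by (simp add: field_simps)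
  also have "\<dots> > 0" using kp r by (intro mult_pos_pos) auto
  finally have "AA * r - BB / r > b" using bAB by linarith
  then have Y: "(AA * r - BB / r) / b > 1" using b by (simp add: field_simps)
  have X2: "((AA * r + BB / r) / a)\<^sup>2 > 1" by (rule one_less_power[OF X]) simp
  have Y2: "((AA * r - BB / r) / b)\<^sup>2 > 1" by (rule one_less_power[OF Y]) simp
  have al: "0 \<le> (Re w / r)\<^sup>2" "0 \<le> (Im w / r)\<^sup>2" by simp_all
  have "(cmod (N (phi w)))\<^sup>2 > 1"
    using wsum_gt[OF al N_phi_sq(2)[OF w, folded r_def] X2 Y2] N_phi_sq(1)[OF w, folded r_def] by simp
  then have "1 ^ 2 < (cmod (N (phi w)))\<^sup>2" by simp
  then show ?thesis by (rule power_less_imp_less_base) simp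
qed

lemma phi_lt:
  assumes "r0 < cmod w" "cmod w < 1" shows "cmod (N (phi w)) < 1"
proof -
  define r where "r = cmod w"
  have r: "r < 1" "r > r0" using assms by (simp_all add: r_def)
  then have r1: "r > 0" using r0_pos by simp
  have w: "w \<noteq> 0" using r1 by (auto simp: r_def)
  have kp: "AA - BB / r > 0" "AA + BB / r > 0" using key_pos[OF r(2)] by auto
  have "AA * r + BB / r - (AA + BB) = (r - 1) * (AA - BB / r)" using r1 by (simp add: field_simps)
  also have "\<dots> < 0" using kp r by (simp add: mult_neg_pos)
  finally have X1: "AA * r + BB / r < a" using aAB by linarith
  have "AA * r + BB / r + (AA + BB) = (r + 1) * (AA + BB / r)" using r1 by (simp add: field_simps)
  also have "\<dots> > 0" using kp r1 by simp
  finally have X2: "AA * r + BB / r > - a" using aAB by linarith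
  have "AA * r - BB / r - (AA - BB) = (r - 1) * (AA + BB / r)" using r1 by (simp add: field_simps)
  also have "\<dots> < 0" using kp r by (simp add: mult_neg_pos)
  finally have Y1: "AA * r - BB / r < b" using bAB by linarith
  have "AA * r - BB / r + (AA - BB) = (r + 1) * (AA - BB / r)" using r1 by (simp add: field_simps)
  also have "\<dots> > 0" using kp r1 by simp
  finally have Y2: "AA * r - BB / r > - b" using bAB by linarith
  have "\<bar>(AA * r + BB / r) / a\<bar> < 1" using X1 X2 a by (simp add: abs_less_iff field_simps)
  then have XX: "((AA * r + BB / r) / a)\<^sup>2 < 1" by (simp add: abs_square_less_1)
  have "\<bar>(AA * r - BB / r) / b\<bar> < 1" using Y1 Y2 b by (simp add: abs_less_iff field_simps)
  then have YY: "((AA * r - BB / r) / b)\<^sup>2 < 1" by (simp add: abs_square_less_1)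
  have al: "0 \<le> (Re w / r)\<^sup>2" "0 \<le> (Im w / r)\<^sup>2" by simp_all
  have "(cmod (N (phi w)))\<^sup>2 < 1"
    using wsum_lt[OF al N_phi_sq(2)[OF w, folded r_def] XX YY] N_phi_sq(1)[OF w, folded r_def] by simp
  then show ?thesis by (simp add: abs_square_less_1)
qed

lemma phi_eq:
  assumes "cmod w = 1" shows "cmod (N (phi w)) = 1"
proof -
  have w: "w \<noteq> 0" using assms by auto
  have "(AA * 1 + BB / 1) / a = 1" "(AA * 1 - BB / 1) / b = 1" using a b by (simp_all add: aAB[symmetric] bAB[symmetric])
  then have "(cmod (N (phi w)))\<^sup>2 = 1"
    using N_phi_sq[OF w] assms by simp
  then have "cmod (N (phi w)) = 1 \<or> cmod (N (phi w)) = - 1" by (simp add: power2_eq_1_iff)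
  then show ?thesis using norm_ge_zero[of "N (phi w)"] by (smt (verit))
qed

lemma phi_outside: "cmod w > 1 \<Longrightarrow> phi w \<in> outside (ellipse c a b theta)"
  using phi_gt outside_eq by simp
lemma phi_inside: "r0 < cmod w \<Longrightarrow> cmod w < 1 \<Longrightarrow> phi w \<in> inside (ellipse c a b theta)"
  using phi_lt inside_eq by simp
lemma phi_on: "cmod w = 1 \<Longrightarrow> phi w \<in> ellipse c a b theta"
  using phi_eq ellipse_eq by simp

lemma phi_sym: "w \<noteq> 0 \<Longrightarrow> phi (complex_of_real BB / (complex_of_real AA * w)) = phi w"
  using AA_pos BB_ne by (simp add: phi_def field_simps)

lemma phi_surj: "\<exists>w. w \<noteq> 0 \<and> phi w = z \<and> r0 < cmod w"
proof -
  define u where "u = U z"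
  define sq where "sq = csqrt (u\<^sup>2 - 4 * complex_of_real AA * complex_of_real BB)"
  define w1 where "w1 = (u + sq) / (2 * complex_of_real AA)"
  define w2 where "w2 = (u - sq) / (2 * complex_of_real AA)"
  have A0: "complex_of_real AA \<noteq> 0" using AA_pos by simp
  have B0: "complex_of_real BB \<noteq> 0" using BB_ne by simp
  have prod: "w1 * w2 = complex_of_real BB / complex_of_real AA"
  proof -
    have "w1 * w2 = (u\<^sup>2 - sq\<^sup>2) / (4 * (complex_of_real AA)\<^sup>2)"
      by (simp add: w1_def w2_def field_simps power2_eq_square)
    also have "sq\<^sup>2 = u\<^sup>2 - 4 * complex_of_real AA * complex_of_real BB" by (simp add: sq_def)
    finally show ?thesis using A0 by (simp add: field_simps power2_eq_square)
  qed
  have sum: "w1 + w2 = u / complex_of_real AA"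
    using A0 by (simp add: w1_def w2_def field_simps)
  have nz: "w1 \<noteq> 0" "w2 \<noteq> 0" using prod A0 B0 by auto
  have sol0: "phi w = z" if v: "w * v = complex_of_real BB / complex_of_real AA" "w + v = u / complex_of_real AA" "w \<noteq> 0" for w v
  proof -
    have "complex_of_real BB / w = complex_of_real AA * v"
      using v A0 by (simp add: field_simps)
    then have "complex_of_real AA * w + complex_of_real BB / w = complex_of_real AA * (w + v)"
      by (simp add: algebra_simps)
    also have "\<dots> = u" using v A0 by simp
    finally have "phi w = c + cis theta * U z" by (simp add: phi_def u_def)
    then show ?thesis using U_inv[of z] by (rule trans[OF _ sym])
  qed
  have sol: "phi w1 = z" "phi w2 = z"
    using sol0[of w1 w2] sol0[of w2 w1] prod sum nz by (simp_all add: mult.commute add.commute)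
  have "cmod w1 * cmod w2 = r0"
  proof -
    have "cmod w1 * cmod w2 = cmod (w1 * w2)" by (simp add: norm_mult)
    also have "\<dots> = \<bar>BB\<bar> / AA" using prod AA_pos by (simp add: norm_divide)
    finally show ?thesis by (simp add: r0_def)
  qed
  show ?thesis
  proof (cases "r0 < cmod w1")
    case True then show ?thesis using sol nz by blast
  next
    case False
    then have "cmod w1 \<le> r0" by simp
    have "cmod w1 > 0" using nz by simp
    then have "cmod w2 = r0 / cmod w1" using \<open>cmod w1 * cmod w2 = r0\<close> by (simp add: field_simps)
    also have "\<dots> \<ge> 1" using \<open>cmod w1 \<le> r0\<close> \<open>cmod w1 > 0\<close> by simp
    finally have "r0 < cmod w2" using r0_lt1 by simp
    then show ?thesis using sol nz by blast
  qed
qed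


end

lemma annulus_reflect_zero:
  fixes K :: "complex \<Rightarrow> complex" and r0 :: real
  assumes r0: "0 < r0" "r0 < 1"
    and holK: "K holomorphic_on {w. r0 < cmod w \<and> cmod w < 1}"
    and contK: "continuous_on {w. r0 < cmod w \<and> cmod w \<le> 1} K"
    and K1: "\<And>w. cmod w = 1 \<Longrightarrow> K w = 0"
    and w: "r0 < cmod w" "cmod w < 1"
  shows "K w = 0"
proof -
  define h where "h = - ln r0"
  have h: "0 < h" using r0 by (simp add: h_def)
  have eh: "exp (- h) = r0" using r0 by (simp add: h_def)
  define S where "S = {s::complex. \<bar>Im s\<bar> < h}"
  define L where "L = (\<lambda>s. K (exp (\<i> * s)))"
  have nexp: "cmod (exp (\<i> * s)) = exp (- Im s)" for s
    by (simp add: norm_exp_eq_Re)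
  have openS: "open S" unfolding S_def
    by (intro open_Collect_less continuous_intros)
  have cnjS: "cnj ` S \<subseteq> S" by (auto simp: S_def)
  have convS: "convex S"
  proof -
    have "S = {s. Im s < h} \<inter> {s. Im s > - h}" by (auto simp: S_def)
    then show ?thesis by (simp add: convex_Int convex_halfspace_Im_lt convex_halfspace_Im_gt)
  qed
  have img1: "(\<lambda>s. exp (\<i> * s)) ` (S \<inter> {z. 0 < Im z}) \<subseteq> {w. r0 < cmod w \<and> cmod w < 1}"
  proof clarify
    fix s assume "s \<in> S" "0 < Im s"
    then have "Im s < h" by (auto simp: S_def)
    then have "exp (- h) < exp (- Im s)" by simp
    moreover have "exp (- Im s) < 1" using \<open>0 < Im s\<close> by simp
    ultimately show "r0 < cmod (exp (\<i> * s)) \<and> cmod (exp (\<i> * s)) < 1"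
      by (simp add: nexp eh)
  qed
  have img2: "(\<lambda>s. exp (\<i> * s)) ` (S \<inter> {z. 0 \<le> Im z}) \<subseteq> {w. r0 < cmod w \<and> cmod w \<le> 1}"
  proof clarify
    fix s assume "s \<in> S" "0 \<le> Im s"
    then have "Im s < h" by (auto simp: S_def)
    then have "exp (- h) < exp (- Im s)" by simp
    moreover have "exp (- Im s) \<le> 1" using \<open>0 \<le> Im s\<close> by simp
    ultimately show "r0 < cmod (exp (\<i> * s)) \<and> cmod (exp (\<i> * s)) \<le> 1"
      by (simp add: nexp eh)
  qed
  have holL: "L holomorphic_on (S \<inter> {z. 0 < Im z})"
  proof -
    have "(K \<circ> (\<lambda>s. exp (\<i> * s))) holomorphic_on (S \<inter> {z. 0 < Im z})"
      by (rule holomorphic_on_compose_gen[OF _ holK img1]) (intro holomorphic_intros)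
    then show ?thesis by (simp add: L_def comp_def)
  qed
  have contL: "continuous_on (S \<inter> {z. 0 \<le> Im z}) L"
  proof -
    have "continuous_on (S \<inter> {z. 0 \<le> Im z}) (K \<circ> (\<lambda>s. exp (\<i> * s)))"
      by (rule continuous_on_compose[OF _ continuous_on_subset[OF contK img2]]) (intro continuous_intros)
    then show ?thesis by (simp add: L_def comp_def)
  qed
  have Lreal: "L z \<in> \<real>" if "z \<in> S" "z \<in> \<real>" for z
  proof -
    have "Im z = 0" using that by (simp add: complex_is_Real_iff)
    then have "K (exp (\<i> * z)) = 0" by (intro K1) (simp add: nexp)
    then show ?thesis by (simp add: L_def)
  qed
  define M where "M = (\<lambda>z. if 0 \<le> Im z then L z else cnj (L (cnj z)))"
  have holM: "M holomorphic_on S"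
    unfolding M_def by (rule Schwarz_reflection[OF openS cnjS holL contL Lreal])
  have M0: "M z = 0" if "z \<in> \<real>" for z
  proof -
    have "Im z = 0" using that by (simp add: complex_is_Real_iff)
    then have "K (exp (\<i> * z)) = 0" by (intro K1) (simp add: nexp)
    then show ?thesis using \<open>Im z = 0\<close> by (simp add: M_def L_def)
  qed
  have RS: "\<real> \<subseteq> S" using h by (auto simp: S_def complex_is_Real_iff)
  have lim: "0 islimpt (\<real> :: complex set)"
  proof (subst islimpt_approachable, intro allI impI)
    fix e :: real assume e: "0 < e"
    have "complex_of_real (e/2) \<in> \<real> \<and> complex_of_real (e/2) \<noteq> 0 \<and> dist (complex_of_real (e/2)) 0 < e"
      using e by (simp add: dist_norm)
    then show "\<exists>x'::complex\<in>\<real>. x' \<noteq> 0 \<and> dist x' 0 < e" by blast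
  qed
  have w0: "w \<noteq> 0" using w r0 by auto
  define s where "s = - \<i> * Ln w"
  have es: "exp (\<i> * s) = w" using w0 by (simp add: s_def)
  have Ims: "Im s = - ln (cmod w)" using w0 by (simp add: s_def)
  have lw: "ln (cmod w) < 0" using w w0 by simp
  have "0 < Im s" using Ims lw by simp
  moreover have "ln r0 < ln (cmod w)" using w r0 by (subst ln_less_cancel_iff) auto
  then have "Im s < h" using Ims by (simp add: h_def)
  ultimately have sS: "s \<in> S" by (simp add: S_def)
  have S0: "0 \<in> S" using h by (simp add: S_def)
  have "M s = 0"
    by (rule analytic_continuation[OF holM openS convex_connected[OF convS] RS S0 lim M0 sS])
  moreover have "M s = K w" using \<open>0 < Im s\<close> es unfolding M_def L_def by simp
  ultimately show ?thesis by simp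
qed



context ell begin

abbreviation "Gam \<equiv> ellipse c a b theta"

lemma closed_Gam: "closed Gam"
  using Gamma_frontier by simp

lemma bounded_Gam: "bounded Gam"
  using Gamma_frontier bounded_K by (metis bounded_closure bounded_subset closure_subset Diff_subset frontier_def)

lemma c_int: "c \<in> interior Kset"
  using interior_K by (simp add: N_def U_def)

lemma closure_inside: "closure (inside Gam) = Kset"
  using inside_eq interior_K convex_closure_interior[OF convex_K] c_int closed_K
  by (metis closure_closed empty_iff)

lemma Gam_sub_closure_inside: "Gam \<subseteq> closure (inside Gam)"
  unfolding closure_inside using ellipse_eq by (auto simp: Kset_def)

lemma Gam_sub_closure_outside: "Gam \<subseteq> closure (outside Gam)"
proof -
  have "outside Gam = - Kset" using outside_eq by (auto simp: Kset_def)
  then show ?thesis unfolding Gamma_frontier using frontier_closures by auto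
qed

lemma open_outside_Gam: "open (outside Gam)" by (rule open_outside[OF closed_Gam])
lemma open_inside_Gam: "open (inside Gam)" by (rule open_inside[OF closed_Gam])

lemma phi_large: "\<exists>T>0. \<forall>v. T \<le> cmod v \<longrightarrow> M \<le> cmod (phi v)"
proof -
  define M' where "M' = \<bar>M\<bar> + \<bar>BB\<bar> + cmod c + 1"
  define T where "T = max 1 (M' / AA)"
  have T: "T > 0" by (simp add: T_def)
  have "M \<le> cmod (phi v)" if v: "T \<le> cmod v" for v
  proof -
    have v1: "1 \<le> cmod v" using v by (simp add: T_def)
    have vM: "M' / AA \<le> cmod v" using v by (simp add: T_def)
    then have vM': "M' \<le> AA * cmod v" using AA_pos by (simp add: field_simps)
    have v0: "v \<noteq> 0" using v1 by auto
    have "cmod (complex_of_real BB / v) = \<bar>BB\<bar> / cmod v" by (simp add: norm_divide)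
    also have "\<dots> \<le> \<bar>BB\<bar>" using divide_left_mono[of 1 "cmod v" "\<bar>BB\<bar>"] v1 v0 by simp
    finally have bv: "cmod (complex_of_real BB / v) \<le> \<bar>BB\<bar>" .
    have "cmod (complex_of_real AA * v) = AA * cmod v" using AA_pos by (simp add: norm_mult)
    then have "AA * cmod v - \<bar>BB\<bar> \<le> cmod (complex_of_real AA * v + complex_of_real BB / v)"
      using bv norm_diff_ineq[of "complex_of_real AA * v" "complex_of_real BB / v"] by simp
    moreover have "cmod (cis theta * (complex_of_real AA * v + complex_of_real BB / v)) = cmod (complex_of_real AA * v + complex_of_real BB / v)"
      by (simp add: norm_mult)
    moreover have "cmod (cis theta * (complex_of_real AA * v + complex_of_real BB / v)) - cmod c \<le> cmod (phi v)"
      unfolding phi_def using norm_diff_ineq[of "cis theta * (complex_of_real AA * v + complex_of_real BB / v)" "c"]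
      by (simp add: add.commute)
    ultimately show ?thesis using vM' by (simp add: M'_def)
  qed
  then show ?thesis using T by blast
qed


definition "psi w = cnj c + cnj (cis theta) * (complex_of_real AA / w + complex_of_real BB * w)"

lemma cnj_psi: "cnj (psi w) = phi (1 / cnj w)"
  by (simp add: psi_def phi_def)

lemma g_zero:
  assumes ms: "matching_solution Gam f g"
  shows "\<forall>z \<in> closure (outside Gam). g z = 0"
proof -
  have holf: "f holomorphic_on inside Gam" and contf: "continuous_on (closure (inside Gam)) f"
    and holg: "g holomorphic_on outside Gam" and contg: "continuous_on (closure (outside Gam)) g"
    and hinf: "holomorphic_at_infinity_with_value g 0" and match: "\<And>z. z \<in> Gam \<Longrightarrow> f z = cnj (g z)"
    using ms by (auto simp: matching_solution_def)
  have ginf: "\<exists>M. \<forall>z. M \<le> cmod z \<longrightarrow> cmod (g z) < e" if e: "e > 0" for e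
  proof -
    obtain R where R: "R > 0" and hh: "(\<lambda>w. if w = 0 then 0 else g (1 / w)) holomorphic_on ball 0 R"
      using hinf by (auto simp: holomorphic_at_infinity_with_value_def)
    define h where "h = (\<lambda>w. if w = 0 then 0 else g (1 / w))"
    have "continuous_on (ball 0 R) h" using hh holomorphic_on_imp_continuous_on by (simp add: h_def)
    then obtain d where d: "d > 0" and dd: "\<And>x'. x' \<in> ball 0 R \<Longrightarrow> dist x' 0 < d \<Longrightarrow> dist (h x') (h 0) < e"
      using e R unfolding continuous_on_iff by (metis centre_in_ball)
    define m where "m = min d R"
    have m: "m > 0" using d R by (simp add: m_def)
    have "cmod (g z) < e" if z: "2 / m \<le> cmod z" for z
    proof -
      have zpos: "cmod z > 0" using z m by (smt (verit) divide_pos_pos)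
      then have z0: "z \<noteq> 0" by auto
      have "cmod (1 / z) = 1 / cmod z" by (simp add: norm_divide)
      also have "\<dots> \<le> m / 2" using z m zpos by (simp add: field_simps)
      also have "\<dots> < m" using m by simp
      finally have lt: "cmod (1 / z) < m" .
      then have "1 / z \<in> ball 0 R" "dist (1 / z) 0 < d" by (auto simp: m_def dist_norm)
      then have "dist (h (1 / z)) (h 0) < e" by (rule dd)
      moreover have "h (1 / z) = g z" using z0 by (simp add: h_def)
      moreover have "h 0 = 0" by (simp add: h_def)
      ultimately show ?thesis by (simp add: dist_norm)
    qed
    then show ?thesis by blast
  qed
  define H0 where "H0 = (\<lambda>w. cnj (g (phi (1 / cnj w))))"
  define D0 where "D0 = ball (0::complex) 1 - {0}"
  have openO': "open (cnj ` outside Gam)"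
    unfolding image_cnj_conv_vimage_cnj
    by (rule open_vimage[OF open_outside_Gam]) (intro continuous_intros)
  have holgc: "(cnj \<circ> g \<circ> cnj) holomorphic_on cnj ` outside Gam"
    by (rule holomorphic_on_compose_cnj_cnj) (use holg openO' in \<open>simp_all add: image_image\<close>)
  have holpsi: "psi holomorphic_on D0"
    unfolding psi_def D0_def by (intro holomorphic_intros) auto
  have psi_img: "psi ` D0 \<subseteq> cnj ` outside Gam"
  proof
    fix y assume "y \<in> psi ` D0"
    then obtain w where w: "w \<in> D0" "y = psi w" by auto
    have "cmod (1 / cnj w) > 1" using w(1) by (auto simp: D0_def norm_divide)
    then have "cnj y \<in> outside Gam" using phi_outside cnj_psi w(2) by simp
    then show "y \<in> cnj ` outside Gam" by (metis complex_cnj_cnj image_eqI)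
  qed
  have holH0: "H0 holomorphic_on D0"
  proof (rule holomorphic_transform[OF holomorphic_on_compose_gen[OF holpsi holgc psi_img]])
    fix w assume "w \<in> D0"
    show "(cnj \<circ> g \<circ> cnj \<circ> psi) w = H0 w" by (simp add: H0_def cnj_psi)
  qed
  have limH0: "H0 \<midarrow>0\<rightarrow> 0"
    unfolding LIM_eq
  proof (intro allI impI)
    fix e :: real assume e: "e > 0"
    obtain M where M: "\<And>z. M \<le> cmod z \<Longrightarrow> cmod (g z) < e" using ginf[OF e] by blast
    obtain T where T: "T > 0" "\<And>v. T \<le> cmod v \<Longrightarrow> M \<le> cmod (phi v)" using phi_large[of M] by blast
    have "cmod (H0 w - 0) < e" if w: "w \<noteq> 0 \<and> cmod (w - 0) < 1 / T" for w
    proof -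
      have wpos: "cmod w > 0" using w by simp
      have "cmod (1 / cnj w) = 1 / cmod w" by (simp add: norm_divide)
      also have "T \<le> 1 / cmod w" using w wpos T by (simp add: field_simps)
      finally have "M \<le> cmod (phi (1 / cnj w))" using T(2) by simp
      then show ?thesis using M by (simp add: H0_def)
    qed
    then show "\<exists>s>0. \<forall>w. w \<noteq> 0 \<and> cmod (w - 0) < s \<longrightarrow> cmod (H0 w - 0) < e"
      using T by (intro exI[of _ "1 / T"]) auto
  qed
  define H where "H = (\<lambda>w. if w = 0 then 0 else H0 w)"
  have holH: "H holomorphic_on ball 0 1"
    unfolding H_def using removable_singularity[of H0 "ball 0 1" 0 0] holH0 limH0 by (simp add: D0_def)
  define Ann where "Ann = {w::complex. r0 < cmod w \<and> cmod w < 1}"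
  define Ann1 where "Ann1 = {w::complex. r0 < cmod w \<and> cmod w \<le> 1}"
  have Ann_nz: "w \<noteq> 0" if "w \<in> Ann1" for w using that r0_pos by (auto simp: Ann1_def)
  have AnnD0: "Ann \<subseteq> D0" using r0_pos by (auto simp: Ann_def D0_def)
  have holphiA: "phi holomorphic_on Ann"
    unfolding phi_def Ann_def using r0_pos by (intro holomorphic_intros) auto
  have phiA: "phi ` Ann \<subseteq> inside Gam" using phi_inside by (auto simp: Ann_def)
  define K where "K = (\<lambda>w. f (phi w) - H0 w)"
  have holK: "K holomorphic_on Ann"
  proof -
    have "(f \<circ> phi) holomorphic_on Ann" by (rule holomorphic_on_compose_gen[OF holphiA holf phiA])
    moreover have "H0 holomorphic_on Ann" using holH0 AnnD0 holomorphic_on_subset by blast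
    ultimately show ?thesis unfolding K_def by (simp add: comp_def holomorphic_on_diff)
  qed
  have contphi1: "continuous_on Ann1 phi"
    unfolding phi_def using Ann_nz by (intro continuous_intros) auto
  have phiA1: "phi ` Ann1 \<subseteq> closure (inside Gam)"
  proof
    fix y assume "y \<in> phi ` Ann1"
    then obtain w where w: "w \<in> Ann1" "y = phi w" by auto
    show "y \<in> closure (inside Gam)"
    proof (cases "cmod w = 1")
      case True then show ?thesis using phi_on Gam_sub_closure_inside w by auto
    next
      case False then show ?thesis using phi_inside[of w] w closure_subset by (force simp: Ann1_def)
    qed
  qed
  have contq: "continuous_on Ann1 (\<lambda>w. phi (1 / cnj w))"
    unfolding phi_def using Ann_nz by (intro continuous_intros) auto
  have qA1: "(\<lambda>w. phi (1 / cnj w)) ` Ann1 \<subseteq> closure (outside Gam)"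
  proof
    fix y assume "y \<in> (\<lambda>w. phi (1 / cnj w)) ` Ann1"
    then obtain w where w: "w \<in> Ann1" "y = phi (1 / cnj w)" by auto
    have n: "cmod (1 / cnj w) = 1 / cmod w" by (simp add: norm_divide)
    show "y \<in> closure (outside Gam)"
    proof (cases "cmod w = 1")
      case True then show ?thesis using phi_on[of "1 / cnj w"] n Gam_sub_closure_outside w by auto
    next
      case False
      then have "cmod w < 1" "cmod w > 0" using w Ann_nz by (auto simp: Ann1_def)
      then have "cmod (1 / cnj w) > 1" using n by simp
      then show ?thesis using phi_outside w closure_subset by auto
    qed
  qed
  have contK: "continuous_on Ann1 K"
  proof -
    have "continuous_on Ann1 (f \<circ> phi)"
      by (rule continuous_on_compose[OF contphi1 continuous_on_subset[OF contf phiA1]])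
    moreover have "continuous_on Ann1 (g \<circ> (\<lambda>w. phi (1 / cnj w)))"
      by (rule continuous_on_compose[OF contq continuous_on_subset[OF contg qA1]])
    ultimately show ?thesis unfolding K_def H0_def comp_def by (intro continuous_intros) auto
  qed
  have K1: "K w = 0" if w: "cmod w = 1" for w
  proof -
    have "w * cnj w = 1" using complex_norm_square[of w] w by simp
    have cw: "cnj w \<noteq> 0" using w by auto
    from \<open>w * cnj w = 1\<close> have "1 / cnj w = w * cnj w / cnj w" by simp
    also have "\<dots> = w" using cw by simp
    finally have "1 / cnj w = w" .
    moreover have "f (phi w) = cnj (g (phi w))" using match phi_on w by blast
    ultimately show ?thesis by (simp add: K_def H0_def)
  qed
  have FH: "f (phi w) = H0 w" if "w \<in> Ann" for w
  proof -
    have "K w = 0"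
      by (rule annulus_reflect_zero[OF r0_pos r0_lt1 _ _ K1])
         (use holK contK that in \<open>simp_all add: Ann_def Ann1_def\<close>)
    then show ?thesis by (simp add: K_def)
  qed
  define q where "q = (\<lambda>w::complex. (complex_of_real BB / complex_of_real AA) * inverse w)"
  have q_eq: "q w = complex_of_real BB / (complex_of_real AA * w)" for w
    by (simp add: q_def divide_inverse mult.assoc)
  have nq: "cmod (q w) = r0 / cmod w" for w
    using AA_pos by (simp add: q_def norm_mult norm_divide r0_def norm_inverse divide_inverse)
  have sym: "H w = H (q w)" if w: "w \<in> Ann" for w
  proof -
    have w0: "w \<noteq> 0" and wp: "cmod w > 0" using w r0_pos by (auto simp: Ann_def)
    have "r0 < r0 / cmod w" using w r0_pos wp by (simp add: Ann_def field_simps)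
    moreover have "r0 / cmod w < 1" using w wp by (simp add: Ann_def field_simps)
    ultimately have qA: "q w \<in> Ann" using nq by (simp add: Ann_def)
    then have q0: "q w \<noteq> 0" using r0_pos by (auto simp: Ann_def)
    have "H w = H0 w" using w0 by (simp add: H_def)
    also have "\<dots> = f (phi w)" using FH w by simp
    also have "\<dots> = f (phi (q w))" using phi_sym[OF w0] by (simp add: q_eq)
    also have "\<dots> = H0 (q w)" using FH qA by simp
    also have "\<dots> = H (q w)" using q0 by (simp add: H_def)
    finally show ?thesis .
  qed
  define E where "E = (\<lambda>w. if cmod w < 1 then H w else H (q w))"
  define Oset where "Oset = {w::complex. r0 < cmod w}"
  have openO: "open Oset" unfolding Oset_def by (intro open_Collect_less continuous_intros)
  have holE1: "E holomorphic_on ball 0 1"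
    by (rule holomorphic_transform[OF holH]) (simp add: E_def)
  have holq: "q holomorphic_on Oset" unfolding q_def Oset_def using r0_pos by (intro holomorphic_intros) auto
  have qO: "q ` Oset \<subseteq> ball 0 1"
  proof
    fix y assume "y \<in> q ` Oset"
    then obtain w where w: "w \<in> Oset" "y = q w" by auto
    have "cmod w > 0" using w r0_pos by (auto simp: Oset_def)
    then have "r0 / cmod w < 1" using w by (simp add: Oset_def field_simps)
    then show "y \<in> ball 0 1" using nq w by simp
  qed
  have holE2: "E holomorphic_on Oset"
  proof (rule holomorphic_transform[OF holomorphic_on_compose_gen[OF holq holH qO]])
    fix w assume w: "w \<in> Oset"
    show "(H \<circ> q) w = E w"
    proof (cases "cmod w < 1")
      case True then show ?thesis using sym[of w] w by (simp add: E_def Ann_def Oset_def)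
    next
      case False then show ?thesis by (simp add: E_def)
    qed
  qed
  have UO: "ball 0 1 \<union> Oset = UNIV" using r0_lt1 by (auto simp: Oset_def)
  have holE: "E holomorphic_on UNIV"
    using holomorphic_on_Un[OF holE1 holE2 open_ball openO] UO by simp
  have contH0: "isCont H 0"
    using holH holomorphic_on_imp_continuous_on continuous_on_eq_continuous_at[of "ball 0 1" H] by simp
  have "(q \<longlongrightarrow> 0) at_infinity"
    unfolding q_def using tendsto_mult[OF tendsto_const tendsto_inverse_0, of "complex_of_real BB / complex_of_real AA"]
    by (simp only: mult_zero_right)
  then have "((\<lambda>w. H (q w)) \<longlongrightarrow> H 0) at_infinity" by (rule isCont_tendsto_compose[OF contH0])
  then have limHq: "((\<lambda>w. H (q w)) \<longlongrightarrow> 0) at_infinity" by (simp add: H_def)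
  have ev: "eventually (\<lambda>w. H (q w) = E w) at_infinity"
    unfolding eventually_at_infinity by (intro exI[of _ 1]) (simp add: E_def)
  have limE: "(E \<longlongrightarrow> 0) at_infinity" by (rule iffD1[OF tendsto_cong[OF ev] limHq])
  have E0: "E z = 0" for z by (rule Liouville_weak_0[OF holE limE])
  have H0z: "H w = 0" if "cmod w < 1" for w using E0[of w] that by (simp add: E_def)
  have gphi: "g (phi w) = 0" if w: "cmod w > 1" for w
  proof -
    define v where "v = 1 / cnj w"
    have w0: "w \<noteq> 0" using w by auto
    have v0: "v \<noteq> 0" and v1: "cmod v < 1" using w w0 by (auto simp: v_def norm_divide)
    have "1 / cnj v = w" by (simp add: v_def)
    then have "H v = cnj (g (phi w))" using v0 by (simp add: H_def H0_def)
    then show ?thesis using H0z[OF v1] by simp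
  qed
  have gout: "g z = 0" if z: "z \<in> outside Gam" for z
  proof -
    obtain w where w: "w \<noteq> 0" "phi w = z" "r0 < cmod w" using phi_surj[of z] by blast
    consider "cmod w < 1" | "cmod w = 1" | "cmod w > 1" by linarith
    then show ?thesis
    proof cases
      case 1
      then have "z \<in> inside Gam" using phi_inside w by blast
      then show ?thesis using z inside_Int_outside by blast
    next
      case 2
      then have "z \<in> Gam" using phi_on w by blast
      then show ?thesis using z outside_no_overlap by blast
    next
      case 3 then show ?thesis using gphi w by blast
    qed
  qed
  show ?thesis using continuous_constant_on_closure[OF contg gout] by blast
qed

end

theorem theorem3p21:
  fixes c :: complex and a b theta :: real and f g :: "complex \<Rightarrow> complex"
  assumes "a > 0" and "b > 0" and "a \<noteq> b"
    and "matching_solution (ellipse c a b theta) f g"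
  shows "(\<exists>k. \<forall>z\<in>closure (inside (ellipse c a b theta)). f z = k) \<and>
         (\<exists>k. \<forall>z\<in>closure (outside (ellipse c a b theta)). g z = k)"
proof -
  interpret ell c a b theta using assms(1-3) by unfold_locales
  have gz: "\<forall>z\<in>closure (outside (ellipse c a b theta)). g z = 0" by (rule g_zero[OF assms(4)])
  have holf: "f holomorphic_on inside (ellipse c a b theta)"
    and contf: "continuous_on (closure (inside (ellipse c a b theta))) f"
    and match: "\<And>z. z \<in> ellipse c a b theta \<Longrightarrow> f z = cnj (g z)"
    using assms(4) by (auto simp: matching_solution_def)
  have fG: "f z = 0" if "z \<in> ellipse c a b theta" for z
    using match[OF that] gz Gam_sub_closure_outside that by auto
  have fin: "f z = 0" if z: "z \<in> inside (ellipse c a b theta)" for z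
  proof -
    have h1: "f holomorphic_on interior (inside (ellipse c a b theta))"
      using holf interior_open[OF open_inside_Gam] by simp
    have h3: "bounded (inside (ellipse c a b theta))" by (rule bounded_inside[OF bounded_Gam])
    have h4: "norm (f w) \<le> 0" if "w \<in> frontier (inside (ellipse c a b theta))" for w
      using that frontier_inside_subset[OF closed_Gam] fG by auto
    have "norm (f z) \<le> 0" by (rule maximum_modulus_frontier[OF h1 contf h3 h4 z])
    then show ?thesis by simp
  qed
  have "\<forall>z\<in>closure (inside (ellipse c a b theta)). f z = 0"
    using continuous_constant_on_closure[OF contf fin] by blast
  then show ?thesis using gz by blast
qed


end
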